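(* Let $(E,d)$ be a metric space with a Borel probability measure $\mu$, let $k\geq1$ and $\alpha_k:[0,\infty)\to[0,\infty)$. The following are equivalent: (1) For all Borel sets $A_1,\ldots,A_k\subset E$ with $(\mu(A_1),\ldots,\mu(A_k))\in\Delta_k$, the set $A=A_1\cup\cdots\cup A_k$ satisfies $\mu(A_r)\geq1-(1-\mu(A))\alpha_k(r)$ for all $0<r\leq\frac12\min_{i\neq j}d(A_i,A_j)$. (2) For all $1$-Lipschitz functions $f_1,\ldots,f_k:E\to\mathbb{R}$ such that the sets $A_i=\{f_i\leq0\}$ satisfy $(\mu(A_1),\ldots,\mu(A_k))\in\Delta_k$, the function $f^*=\min(f_1,\ldots,f_k)$ satisfies $\mu(f^*<r)\geq1-\mu(f^*>0)\,\alpha_k(r)$ for all $0<r\leq\frac12\min_{i\neq j}d(A_i,A_j)$.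
   Context: For $A,B\subset E$, $d(A,B)=\inf\{d(x,y):x\in A,y\in B\}$. For $A\subset E$ and $r>0$, $A_r=\{x\in E:\exists y\in A,\ d(x,y)<r\}$. $\Delta_k$ is the set of $(a_1,\ldots,a_k)\in[0,1]^k$ with $\sum_ja_j\leq1$ and $a_i+\sum_ja_j\geq1$ for every $i$. *)

theory Defs
  imports "HOL-Probability.Probability"
begin

text \<open>Distance between sets, d(A,B) = inf of d(x,y); valued in ereal so that
  the infimum over an empty set is +infinity.\<close>
definition set_dist :: "'a::metric_space set \<Rightarrow> 'a set \<Rightarrow> ereal" where
  "set_dist A B = (INF x\<in>A. INF y\<in>B. ereal (dist x y))"

definition enlarge :: "'a::metric_space set \<Rightarrow> real \<Rightarrow> 'a set" where
  "enlarge A r = {x. \<exists>y\<in>A. dist x y < r}"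

definition Delta :: "nat \<Rightarrow> (nat \<Rightarrow> real) \<Rightarrow> bool" where
  "Delta k a \<longleftrightarrow> (\<forall>i<k. 0 \<le> a i \<and> a i \<le> 1) \<and> (\<Sum>j<k. a j) \<le> 1
      \<and> (\<forall>i<k. a i + (\<Sum>j<k. a j) \<ge> 1)"

text \<open>min over i \<noteq> j of d(A_i,A_j) (= +infinity when k = 1).\<close>
definition min_sep :: "nat \<Rightarrow> (nat \<Rightarrow> 'a::metric_space set) \<Rightarrow> ereal" where
  "min_sep k A = (INF i\<in>{..<k}. INF j\<in>{..<k}-{i}. set_dist (A i) (A j))"

end

theory Submission
  imports Defs
begin

lemma sep_closure:
  fixes A B :: "'a::metric_space set"
  assumes "ereal c \<le> set_dist A B"
  shows "ereal c \<le> set_dist (closure A) (closure B)"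
proof -
  have h: "\<forall>x\<in>A. \<forall>y\<in>B. c \<le> dist x y" using assms by (auto simp: set_dist_def le_INF_iff)
  have h2: "\<forall>x\<in>closure A. \<forall>y\<in>B. c \<le> dist x y"
  proof (intro ballI)
    fix x y assume x: "x \<in> closure A" and y: "y \<in> B"
    have "closure A \<subseteq> {x. c \<le> dist x y}"
      by (rule closure_minimal) (use h y in \<open>auto intro!: closed_Collect_le continuous_intros\<close>)
    with x show "c \<le> dist x y" by auto
  qed
  have h3: "\<forall>x\<in>closure A. \<forall>y\<in>closure B. c \<le> dist x y"
  proof (intro ballI)
    fix x y assume x: "x \<in> closure A" and y: "y \<in> closure B"
    have "closure B \<subseteq> {y. c \<le> dist x y}"
      by (rule closure_minimal) (use h2 x in \<open>auto intro!: closed_Collect_le continuous_intros\<close>)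
    with y show "c \<le> dist x y" by auto
  qed
  then show ?thesis by (auto simp: set_dist_def le_INF_iff)
qed

lemma min_sep_closure:
  "ereal c \<le> min_sep k A \<Longrightarrow> ereal c \<le> min_sep k (\<lambda>i. closure (A i))"
  by (auto simp: min_sep_def le_INF_iff intro: sep_closure)

lemma infdist_less:
  assumes "A \<noteq> {}"
  shows "infdist x A < r \<longleftrightarrow> (\<exists>y\<in>A. dist x y < r)"
proof -
  have "bdd_below ((\<lambda>a. dist x a) ` A)" by (rule bdd_belowI[of _ 0]) auto
  then show ?thesis using assms by (simp add: infdist_notempty cINF_less_iff)
qed

lemma enlarge_open: "open (enlarge S r)"
proof -
  have "enlarge S r = (\<Union>y\<in>S. ball y r)" by (auto simp: enlarge_def dist_commute)
  then show ?thesis by auto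
qed

lemma half_le: "ereal r \<le> x / 2 \<longleftrightarrow> ereal (2 * r) \<le> x"
  using ereal_le_divide_pos[of 2 "ereal r" x] by simp

theorem proposition4p1:
  fixes M :: "'a::metric_space measure" and k :: nat and \<alpha> :: "real \<Rightarrow> real"
  assumes "prob_space M" and "sets M = sets borel" and "k \<ge> 1"
    and "\<And>r. r \<ge> 0 \<Longrightarrow> \<alpha> r \<ge> 0"
  shows "(\<forall>A :: nat \<Rightarrow> 'a set.
            (\<forall>i<k. A i \<in> sets borel) \<and> Delta k (\<lambda>i. measure M (A i)) \<longrightarrow>
            (\<forall>r. 0 < r \<and> ereal r \<le> min_sep k A / 2 \<longrightarrow>
               measure M (enlarge (\<Union>i<k. A i) r)
                 \<ge> 1 - (1 - measure M (\<Union>i<k. A i)) * \<alpha> r))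
     \<longleftrightarrow>
         (\<forall>f :: nat \<Rightarrow> 'a \<Rightarrow> real.
            (\<forall>i<k. 1-lipschitz_on UNIV (f i)) \<and>
            Delta k (\<lambda>i. measure M {x. f i x \<le> 0}) \<longrightarrow>
            (\<forall>r. 0 < r \<and> ereal r \<le> min_sep k (\<lambda>i. {x. f i x \<le> 0}) / 2 \<longrightarrow>
               measure M {x. Min ((\<lambda>i. f i x) ` {..<k}) < r}
                 \<ge> 1 - measure M {x. Min ((\<lambda>i. f i x) ` {..<k}) > 0} * \<alpha> r))"
proof -
  interpret P: prob_space M by fact
  have meas: "\<And>S. S \<in> sets borel \<Longrightarrow> S \<in> sets M" using assms(2) by simp
  have sp: "space M = UNIV" using sets_eq_imp_space_eq[OF assms(2)] by simp
  have Kne: "{..<k} \<noteq> {}" using assms(3) by (simp add: lessThan_empty_iff)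
  have Kfin: "finite {..<k}" by simp
  show ?thesis
  proof
    assume H1: "\<forall>A :: nat \<Rightarrow> 'a set.
            (\<forall>i<k. A i \<in> sets borel) \<and> Delta k (\<lambda>i. measure M (A i)) \<longrightarrow>
            (\<forall>r. 0 < r \<and> ereal r \<le> min_sep k A / 2 \<longrightarrow>
               measure M (enlarge (\<Union>i<k. A i) r)
                 \<ge> 1 - (1 - measure M (\<Union>i<k. A i)) * \<alpha> r)"
    show "\<forall>f :: nat \<Rightarrow> 'a \<Rightarrow> real.
            (\<forall>i<k. 1-lipschitz_on UNIV (f i)) \<and>
            Delta k (\<lambda>i. measure M {x. f i x \<le> 0}) \<longrightarrow>
            (\<forall>r. 0 < r \<and> ereal r \<le> min_sep k (\<lambda>i. {x. f i x \<le> 0}) / 2 \<longrightarrow>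
               measure M {x. Min ((\<lambda>i. f i x) ` {..<k}) < r}
                 \<ge> 1 - measure M {x. Min ((\<lambda>i. f i x) ` {..<k}) > 0} * \<alpha> r)"
    proof (intro allI impI)
      fix f :: "nat \<Rightarrow> 'a \<Rightarrow> real" and r :: real
      assume hf: "(\<forall>i<k. 1-lipschitz_on UNIV (f i)) \<and> Delta k (\<lambda>i. measure M {x. f i x \<le> 0})"
        and hr: "0 < r \<and> ereal r \<le> min_sep k (\<lambda>i. {x. f i x \<le> 0}) / 2"
      define A where "A = (\<lambda>i. {x. f i x \<le> (0::real)})"
      have cont: "continuous_on UNIV (f i)" if "i < k" for i
        using hf that lipschitz_on_continuous_on by blast
      have closedA: "closed (A i)" if "i < k" for i
        unfolding A_def by (rule closed_Collect_le) (auto intro: cont[OF that] continuous_intros)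
      have "\<forall>i<k. A i \<in> sets borel" using closedA by auto
      then have P: "(\<forall>i<k. A i \<in> sets borel) \<and> Delta k (\<lambda>i. measure M (A i))"
        using hf unfolding A_def by simp
      have Q: "0 < r \<and> ereal r \<le> min_sep k A / 2" using hr unfolding A_def .
      have key: "measure M (enlarge (\<Union>i<k. A i) r)
               \<ge> 1 - (1 - measure M (\<Union>i<k. A i)) * \<alpha> r"
        using H1[THEN spec[of _ A], THEN mp, OF P, THEN spec[of _ r], THEN mp, OF Q] .
      have eq1: "{x. Min ((\<lambda>i. f i x) ` {..<k}) < r} = (\<Union>i<k. {x. f i x < r})"
        using Kne Kfin by (auto simp: Min_less_iff)
      have eq2: "{x. Min ((\<lambda>i. f i x) ` {..<k}) > 0} = space M - (\<Union>i<k. A i)"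
        using Kne Kfin by (auto simp: Min_gr_iff sp A_def not_le) (meson lessThan_iff not_less)
      have sub: "enlarge (\<Union>i<k. A i) r \<subseteq> (\<Union>i<k. {x. f i x < r})"
      proof
        fix x assume "x \<in> enlarge (\<Union>i<k. A i) r"
        then obtain i y where i: "i < k" and y: "f i y \<le> 0" and d: "dist x y < r"
          by (auto simp: enlarge_def A_def)
        have "dist (f i x) (f i y) \<le> 1 * dist x y"
          using hf i by (intro lipschitz_onD) auto
        then have "f i x < r" using y d by (simp add: dist_real_def abs_le_iff)
        with i show "x \<in> (\<Union>i<k. {x. f i x < r})" by auto
      qed
      have openU: "open (\<Union>i<k. {x. f i x < r})"
        by (intro open_UN ballI open_Collect_less) (auto intro: cont continuous_intros)
      have m1: "measure M (enlarge (\<Union>i<k. A i) r) \<le> measure M (\<Union>i<k. {x. f i x < r})"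
        using sub openU enlarge_open
        by (intro P.finite_measure_mono) (auto intro: meas borel_open)
      have UA: "(\<Union>i<k. A i) \<in> sets M"
        using closedA by (intro meas borel_closed closed_UN) auto
      have m2: "measure M (space M - (\<Union>i<k. A i)) = 1 - measure M (\<Union>i<k. A i)"
        using P.prob_compl[OF UA] .
      show "measure M {x. Min ((\<lambda>i. f i x) ` {..<k}) < r}
                 \<ge> 1 - measure M {x. Min ((\<lambda>i. f i x) ` {..<k}) > 0} * \<alpha> r"
        unfolding eq1 eq2 m2 using key m1 by linarith
    qed
  next
    assume H2: "\<forall>f :: nat \<Rightarrow> 'a \<Rightarrow> real.
            (\<forall>i<k. 1-lipschitz_on UNIV (f i)) \<and>
            Delta k (\<lambda>i. measure M {x. f i x \<le> 0}) \<longrightarrow>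
            (\<forall>r. 0 < r \<and> ereal r \<le> min_sep k (\<lambda>i. {x. f i x \<le> 0}) / 2 \<longrightarrow>
               measure M {x. Min ((\<lambda>i. f i x) ` {..<k}) < r}
                 \<ge> 1 - measure M {x. Min ((\<lambda>i. f i x) ` {..<k}) > 0} * \<alpha> r)"
    show "\<forall>A :: nat \<Rightarrow> 'a set.
            (\<forall>i<k. A i \<in> sets borel) \<and> Delta k (\<lambda>i. measure M (A i)) \<longrightarrow>
            (\<forall>r. 0 < r \<and> ereal r \<le> min_sep k A / 2 \<longrightarrow>
               measure M (enlarge (\<Union>i<k. A i) r)
                 \<ge> 1 - (1 - measure M (\<Union>i<k. A i)) * \<alpha> r)"
    proof (intro allI impI)
      fix A :: "nat \<Rightarrow> 'a set" and r :: real
      assume hA: "(\<forall>i<k. A i \<in> sets borel) \<and> Delta k (\<lambda>i. measure M (A i))"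
        and hr: "0 < r \<and> ereal r \<le> min_sep k A / 2"
      define f where "f = (\<lambda>i x. if A i = {} then r else infdist x (A i))"
      define C where "C = (\<lambda>i. closure (A i))"
      have lip: "\<forall>i<k. 1-lipschitz_on UNIV (f i)"
      proof (intro allI impI lipschitz_onI)
        fix i x y show "dist (f i x) (f i y) \<le> 1 * dist x y"
          using infdist_triangle_abs[of x "A i" y] by (auto simp: f_def dist_real_def)
      qed simp
      have zero: "{x. f i x \<le> 0} = C i" for i
      proof (cases "A i = {}")
        case True then show ?thesis using hr by (auto simp: f_def C_def)
      next
        case False
        then show ?thesis using in_closure_iff_infdist_zero[OF False] infdist_nonneg
          by (auto simp: f_def C_def intro: antisym)
      qed
      have Cmeas: "C i \<in> sets M" for i unfolding C_def by (intro meas borel_closed) auto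
      have Ameas: "A i \<in> sets M" if "i < k" for i using hA that meas by auto
      have AC: "measure M (A i) \<le> measure M (C i)" if "i < k" for i
        using Ameas[OF that] Cmeas by (intro P.finite_measure_mono) (auto simp: C_def closure_subset)
      have sep2: "ereal (2 * r) \<le> min_sep k C"
        using hr min_sep_closure half_le unfolding C_def by blast
      have disj: "disjoint_family_on C {..<k}"
      proof (auto simp: disjoint_family_on_def)
        fix i j x assume i: "i < k" and j: "j < k" and ij: "i \<noteq> j" and x: "x \<in> C i" "x \<in> C j"
        have "ereal (2 * r) \<le> set_dist (C i) (C j)"
          using sep2 i j ij by (auto simp: min_sep_def le_INF_iff)
        then have "2 * r \<le> dist x x" using x by (auto simp: set_dist_def le_INF_iff) fastforce
        then show False using hr by simp
      qed
      have sumC: "(\<Sum>j<k. measure M (C j)) \<le> 1"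
      proof -
        have "measure M (\<Union>i<k. C i) = (\<Sum>j<k. measure M (C j))"
          by (rule P.finite_measure_finite_Union) (use disj Cmeas in auto)
        then show ?thesis using P.prob_le_1[of "\<Union>i<k. C i"] by linarith
      qed
      have sumAC: "(\<Sum>j<k. measure M (A j)) \<le> (\<Sum>j<k. measure M (C j))"
        using AC by (intro sum_mono) auto
      have DC: "Delta k (\<lambda>i. measure M {x. f i x \<le> 0})"
        unfolding zero using hA sumC sumAC AC P.prob_le_1
        by (auto simp: Delta_def) (smt (verit) AC)+
      have sepf: "ereal r \<le> min_sep k (\<lambda>i. {x. f i x \<le> 0}) / 2"
        unfolding zero half_le using sep2 by simp
      have P2: "(\<forall>i<k. 1-lipschitz_on UNIV (f i)) \<and> Delta k (\<lambda>i. measure M {x. f i x \<le> 0})"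
        using lip DC by simp
      have Q2: "0 < r \<and> ereal r \<le> min_sep k (\<lambda>i. {x. f i x \<le> 0}) / 2" using hr sepf by simp
      note key0 = H2[THEN spec[of _ f], THEN mp, OF P2, THEN spec[of _ r], THEN mp, OF Q2]
      have key:
        "measure M {x. Min ((\<lambda>i. f i x) ` {..<k}) < r}
                 \<ge> 1 - measure M {x. Min ((\<lambda>i. f i x) ` {..<k}) > 0} * \<alpha> r" by (rule key0)
      have eq1: "{x. Min ((\<lambda>i. f i x) ` {..<k}) < r} = enlarge (\<Union>i<k. A i) r"
      proof -
        have lt: "f i x < r \<longleftrightarrow> (\<exists>y\<in>A i. dist x y < r)" for i x
          by (cases "A i = {}") (auto simp: f_def infdist_less)
        have mn: "Min ((\<lambda>i. f i x) ` {..<k}) < r \<longleftrightarrow> (\<exists>i<k. f i x < r)" for x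
          using Kne Kfin by (auto simp add: Min_less_iff)
        show ?thesis by (auto simp: mn lt enlarge_def)
      qed
      have pos: "0 < f i x \<longleftrightarrow> x \<notin> C i" for i x
      proof -
        have "x \<in> C i \<longleftrightarrow> f i x \<le> 0" using zero[of i] by blast
        then show ?thesis by auto
      qed
      have eq2: "{x. Min ((\<lambda>i. f i x) ` {..<k}) > 0} = space M - (\<Union>i<k. C i)"
        using Kne Kfin by (auto simp: Min_gr_iff sp pos)
      have UC: "(\<Union>i<k. C i) \<in> sets M" unfolding C_def
        by (intro meas borel_closed closed_UN) auto
      have m2: "measure M (space M - (\<Union>i<k. C i)) = 1 - measure M (\<Union>i<k. C i)"
        using P.prob_compl[OF UC] .
      have m3: "measure M (\<Union>i<k. A i) \<le> measure M (\<Union>i<k. C i)"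
        using UC Ameas by (intro P.finite_measure_mono) (auto simp: C_def dest: closure_subset[THEN subsetD])
      have al: "\<alpha> r \<ge> 0" using assms(4) hr by simp
      have "(1 - measure M (\<Union>i<k. C i)) * \<alpha> r \<le> (1 - measure M (\<Union>i<k. A i)) * \<alpha> r"
        using m3 al by (intro mult_right_mono) auto
      then show "measure M (enlarge (\<Union>i<k. A i) r)
                 \<ge> 1 - (1 - measure M (\<Union>i<k. A i)) * \<alpha> r"
        using key unfolding eq1 eq2 m2 by linarith
    qed
  qed
qed

end
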